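(* Let $G$ be the disjointness graph of a finite family of non-wide $2$-way infinite $3$-monotone chains in the plane. Then $\chi(G)\le\omega(G)^3$.
   Context: A curve is $x$-monotone if every vertical line meets it in at most one point. A $2$-way infinite $3$-monotone chain is a (possibly self-intersecting) continuous curve in the plane that is the union of $3$ consecutive $x$-monotone pieces, consecutive pieces sharing an endpoint, with the first and last pieces having unbounded projections to the $x$-axis. It is non-wide if some vertical line does not meet it. The disjointness graph of a family has the members as vertices, two adjacent if and only if they are disjoint; $\chi$ and $\omega$ denote chromatic and clique number. *)

theory Defs
  imports "HOL-Analysis.Analysis"
begin

type_synonym point = "real \<times> real"

definition xgraph :: "real set \<Rightarrow> (real \<Rightarrow> real) \<Rightarrow> point set" where
  "xgraph I f = (\<lambda>x. (x, f x)) ` I"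

definition closed_ray :: "real \<Rightarrow> real set \<Rightarrow> bool" where
  "closed_ray a R \<longleftrightarrow> R = {..a} \<or> R = {a..}"

text \<open>A 2-way infinite 3-monotone chain: union of three consecutive x-monotone
  pieces (graphs of continuous functions over intervals), consecutive pieces sharing
  an endpoint, the first and last piece having unbounded projections.\<close>
definition two_way_inf_3mono_chain :: "point set \<Rightarrow> bool" where
  "two_way_inf_3mono_chain C \<longleftrightarrow>
     (\<exists>a b R1 R3 f1 f2 f3.
        closed_ray a R1 \<and> closed_ray b R3 \<and>
        continuous_on R1 f1 \<and> continuous_on (closed_segment a b) f2 \<and>
        continuous_on R3 f3 \<and>
        f1 a = f2 a \<and> f2 b = f3 b \<and>
        C = xgraph R1 f1 \<union> xgraph (closed_segment a b) f2 \<union> xgraph R3 f3)"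

definition non_wide :: "point set \<Rightarrow> bool" where
  "non_wide C \<longleftrightarrow> (\<exists>x0. \<forall>p\<in>C. fst p \<noteq> x0)"

definition disjointness_edge :: "('v \<Rightarrow> point set) \<Rightarrow> 'v \<Rightarrow> 'v \<Rightarrow> bool" where
  "disjointness_edge C u v \<longleftrightarrow> u \<noteq> v \<and> C u \<inter> C v = {}"

definition chromatic_number :: "'v set \<Rightarrow> ('v \<Rightarrow> 'v \<Rightarrow> bool) \<Rightarrow> nat" where
  "chromatic_number V E =
     (LEAST k. \<exists>c :: 'v \<Rightarrow> nat. (\<forall>v\<in>V. c v < k) \<and>
                  (\<forall>u\<in>V. \<forall>v\<in>V. E u v \<longrightarrow> c u \<noteq> c v))"

definition clique_number :: "'v set \<Rightarrow> ('v \<Rightarrow> 'v \<Rightarrow> bool) \<Rightarrow> nat" where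
  "clique_number V E =
     Max {card S | S. S \<subseteq> V \<and> (\<forall>u\<in>S. \<forall>v\<in>S. u \<noteq> v \<longrightarrow> E u v)}"

end

theory Submission
  imports Defs
begin

lemma sign_const:
  fixes g :: "real \<Rightarrow> real"
  assumes "convex J" "continuous_on J g" "\<forall>x\<in>J. g x \<noteq> 0" "a \<in> J" "g a > 0" "x \<in> J"
  shows "g x > 0"
proof (rule ccontr)
  assume "\<not> g x > 0"
  then have "g x < 0" using assms by force
  have c: "connected (g ` J)" using assms convex_connected connected_continuous_image by blast
  have "0 \<in> g ` J" using connectedD_interval[OF c, of "g x" "g a" 0] assms \<open>g x < 0\<close> by auto
  then show False using assms by auto
qed

lemma sign_const_neg:
  fixes g :: "real \<Rightarrow> real"
  assumes "convex J" "continuous_on J g" "\<forall>x\<in>J. g x \<noteq> 0" "a \<in> J" "g a < 0" "x \<in> J"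
  shows "g x < 0"
  using sign_const[of J "\<lambda>x. - g x" a x] assms by (auto intro: continuous_intros)

definition dm :: "bool \<Rightarrow> real \<Rightarrow> real set" where
  "dm b e = (if b then {..e} else {e..})"

definition good :: "bool \<Rightarrow> real \<Rightarrow> (real \<Rightarrow> real) \<Rightarrow> (real \<Rightarrow> real) \<Rightarrow> bool" where
  "good b e l h \<longleftrightarrow> continuous_on (dm b e) l \<and> continuous_on (dm b e) h \<and>
     (\<forall>x\<in>dm b e. l x \<le> h x) \<and> l e = h e"

definition cset :: "bool \<Rightarrow> real \<Rightarrow> (real \<Rightarrow> real) \<Rightarrow> (real \<Rightarrow> real) \<Rightarrow> (real \<times> real) set" where
  "cset b e l h = {(x,y). x \<in> dm b e \<and> (y = l x \<or> y = h x)}"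

definition encl :: "bool \<Rightarrow> real \<Rightarrow> (real \<Rightarrow> real) \<Rightarrow> (real \<Rightarrow> real) \<Rightarrow> bool \<Rightarrow> real \<Rightarrow> (real \<Rightarrow> real) \<Rightarrow> (real \<Rightarrow> real) \<Rightarrow> bool" where
  "encl b1 e1 l1 h1 b2 e2 l2 h2 \<longleftrightarrow> b1 = b2 \<and> dm b1 e1 \<subseteq> dm b2 e2 \<and>
     (\<forall>x\<in>dm b1 e1. l2 x < l1 x \<and> h1 x < h2 x)"

definition below :: "bool \<Rightarrow> real \<Rightarrow> (real \<Rightarrow> real) \<Rightarrow> (real \<Rightarrow> real) \<Rightarrow> bool \<Rightarrow> real \<Rightarrow> (real \<Rightarrow> real) \<Rightarrow> (real \<Rightarrow> real) \<Rightarrow> bool" where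
  "below b1 e1 l1 h1 b2 e2 l2 h2 \<longleftrightarrow>
     (\<forall>x\<in>dm b1 e1 \<inter> dm b2 e2. h1 x < l2 x)"

definition kle where
  "kle b1 (e1::real) b2 e2 \<longleftrightarrow> (b1 \<and> \<not> b2) \<or> (b1 = b2 \<and> e1 \<le> e2)"

lemma dm_convex[simp]: "convex (dm b e)" by (simp add: dm_def)
lemma dm_e[simp]: "e \<in> dm b e" by (simp add: dm_def)

lemma disj_pts:
  assumes "cset b1 e1 l1 h1 \<inter> cset b2 e2 l2 h2 = {}" "x \<in> dm b1 e1" "x \<in> dm b2 e2"
  shows "l2 x \<noteq> l1 x" "l2 x \<noteq> h1 x" "h2 x \<noteq> l1 x" "h2 x \<noteq> h1 x"
  using assms by (auto simp: cset_def)

lemma nested: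
  assumes g1: "good b1 e1 l1 h1" and g2: "good b2 e2 l2 h2"
    and d: "cset b1 e1 l1 h1 \<inter> cset b2 e2 l2 h2 = {}"
    and sub: "dm b1 e1 \<subseteq> dm b2 e2" and bb: "b1 = b2"
  shows "encl b1 e1 l1 h1 b2 e2 l2 h2 \<or> below b1 e1 l1 h1 b2 e2 l2 h2 \<or> below b2 e2 l2 h2 b1 e1 l1 h1"
proof -
  let ?J = "dm b1 e1"
  have cl1: "continuous_on ?J l1" and ch1: "continuous_on ?J h1" using g1 by (auto simp: good_def)
  have cl2: "continuous_on ?J l2" and ch2: "continuous_on ?J h2"
    using g2 sub continuous_on_subset by (auto simp: good_def)
  have le2: "l2 x \<le> h2 x" if "x \<in> ?J" for x using g2 sub that by (auto simp: good_def)
  have p: "l1 e1 = h1 e1" using g1 by (simp add: good_def)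
  have dd: "\<And>x. x \<in> ?J \<Longrightarrow> l2 x \<noteq> l1 x \<and> l2 x \<noteq> h1 x \<and> h2 x \<noteq> l1 x \<and> h2 x \<noteq> h1 x"
    using disj_pts[OF d] sub by blast
  have e1J: "e1 \<in> ?J" by simp
  have int: "dm b1 e1 \<inter> dm b2 e2 = ?J" using sub by blast
  consider "l2 e1 > h1 e1" | "h2 e1 < l1 e1" | "l2 e1 < l1 e1" "h2 e1 > h1 e1"
    using dd[OF e1J] p le2[OF e1J] by linarith
  then show ?thesis
  proof cases
    case 1
    have "\<forall>x\<in>?J. l2 x - h1 x > 0"
      using sign_const[of ?J "\<lambda>x. l2 x - h1 x" e1] continuous_on_diff[OF cl2 ch1] dd 1 cl2 ch1
      by force
    then show ?thesis unfolding below_def int by auto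
  next
    case 2
    have "\<forall>x\<in>?J. l1 x - h2 x > 0"
      using sign_const[of ?J "\<lambda>x. l1 x - h2 x" e1, OF _ continuous_on_diff[OF cl1 ch2]] dd 2
      by force
    then show ?thesis unfolding below_def by (auto simp: Int_commute int)
  next
    case 3
    have "\<forall>x\<in>?J. l1 x - l2 x > 0"
      using sign_const[of ?J "\<lambda>x. l1 x - l2 x" e1] continuous_on_diff[OF cl1 cl2] dd 3 cl1 cl2
      by force
    moreover have "\<forall>x\<in>?J. h2 x - h1 x > 0"
      using sign_const[of ?J "\<lambda>x. h2 x - h1 x" e1] continuous_on_diff[OF ch2 ch1] dd 3 ch1 ch2
      by force
    ultimately show ?thesis unfolding encl_def using sub bb by auto
  qed
qed

lemma mixed:
  assumes g1: "good True e1 l1 h1" and g2: "good False e2 l2 h2"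
    and d: "cset True e1 l1 h1 \<inter> cset False e2 l2 h2 = {}"
  shows "below True e1 l1 h1 False e2 l2 h2 \<or> below False e2 l2 h2 True e1 l1 h1"
proof (cases "e2 \<le> e1")
  case False
  then have "dm True e1 \<inter> dm False e2 = {}" by (auto simp: dm_def)
  then show ?thesis by (simp add: below_def)
next
  case True
  let ?J = "dm True e1 \<inter> dm False e2"
  have J: "?J = {e2..e1}" by (auto simp: dm_def)
  have cv: "convex ?J" by (simp add: J)
  have cl1: "continuous_on ?J l1" and ch1: "continuous_on ?J h1"
    using g1 by (auto simp: good_def intro: continuous_on_subset[OF _ Int_lower1])
  have cl2: "continuous_on ?J l2" and ch2: "continuous_on ?J h2"
    using g2 by (auto simp: good_def intro: continuous_on_subset[OF _ Int_lower2])
  have dd: "\<And>x. x \<in> ?J \<Longrightarrow> l2 x \<noteq> l1 x \<and> l2 x \<noteq> h1 x \<and> h2 x \<noteq> l1 x \<and> h2 x \<noteq> h1 x"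
    using disj_pts[OF d] by blast
  have e1J: "e1 \<in> ?J" and e2J: "e2 \<in> ?J" using True by (auto simp: J)
  have p1: "l1 e1 = h1 e1" using g1 by (simp add: good_def)
  have p2: "l2 e2 = h2 e2" using g2 by (simp add: good_def)
  show ?thesis
  proof (cases "l2 e1 > h1 e1")
    case True
    have "\<forall>x\<in>?J. l2 x - h1 x > 0"
      using sign_const[OF cv, of "\<lambda>x. l2 x - h1 x" e1] continuous_on_diff[OF cl2 ch1] dd True cl2 ch1 e1J
      by force
    then show ?thesis unfolding below_def by auto
  next
    case False
    then have "l2 e1 - l1 e1 < 0" using dd[OF e1J] p1 by linarith
    then have "l2 e2 - l1 e2 < 0"
      using sign_const_neg[OF cv, of "\<lambda>x. l2 x - l1 x" e1 e2] continuous_on_diff[OF cl2 cl1] dd cl2 cl1 e1J e2J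
      by force
    then have "h2 e2 - l1 e2 < 0" using p2 by simp
    then have "\<forall>x\<in>?J. h2 x - l1 x < 0"
      using sign_const_neg[OF cv, of "\<lambda>x. h2 x - l1 x" e2] continuous_on_diff[OF ch2 cl1] dd ch2 cl1 e2J
      by force
    then show ?thesis unfolding below_def by (auto simp: Int_commute)
  qed
qed


lemma coverage:
  assumes g1: "good b1 e1 l1 h1" and g2: "good b2 e2 l2 h2"
    and d: "cset b1 e1 l1 h1 \<inter> cset b2 e2 l2 h2 = {}"
  shows "encl b1 e1 l1 h1 b2 e2 l2 h2 \<or> encl b2 e2 l2 h2 b1 e1 l1 h1 \<or>
         below b1 e1 l1 h1 b2 e2 l2 h2 \<or> below b2 e2 l2 h2 b1 e1 l1 h1"
proof (cases "b1 = b2")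
  case True
  have d': "cset b2 e2 l2 h2 \<inter> cset b1 e1 l1 h1 = {}" using d by blast
  have "dm b1 e1 \<subseteq> dm b2 e2 \<or> dm b2 e2 \<subseteq> dm b1 e1"
    using True by (cases "e1 \<le> e2") (auto simp: dm_def)
  then show ?thesis
    using nested[OF g1 g2 d _ True] nested[OF g2 g1 d' _ True[symmetric]] by blast
next
  case False
  show ?thesis
  proof (cases b1)
    case True
    with False have "\<not> b2" by simp
    then show ?thesis using mixed[of e1 l1 h1 e2 l2 h2] g1 g2 d True by simp
  next
    case b1: False
    with False have b2: "b2" by simp
    have d': "cset b2 e2 l2 h2 \<inter> cset b1 e1 l1 h1 = {}" using d by blast
    from b1 b2 have bb: "b1 = False" "b2 = True" by auto
    show ?thesis using mixed[of e2 l2 h2 e1 l1 h1] g1 g2 d' unfolding bb by blast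
  qed
qed

lemma encl_trans:
  assumes "encl b1 e1 l1 h1 b2 e2 l2 h2" "encl b2 e2 l2 h2 b3 e3 l3 h3"
  shows "encl b1 e1 l1 h1 b3 e3 l3 h3"
proof -
  have a: "b1 = b2" "dm b1 e1 \<subseteq> dm b2 e2" "\<forall>x\<in>dm b1 e1. l2 x < l1 x \<and> h1 x < h2 x"
    "b2 = b3" "dm b2 e2 \<subseteq> dm b3 e3" "\<forall>x\<in>dm b2 e2. l3 x < l2 x \<and> h2 x < h3 x"
    using assms unfolding encl_def by blast+
  have "\<forall>x\<in>dm b1 e1. l3 x < l1 x \<and> h1 x < h3 x"
  proof
    fix x assume x: "x \<in> dm b1 e1"
    then have "x \<in> dm b2 e2" using a(2) by blast
    then have "l3 x < l2 x \<and> h2 x < h3 x" using a(6) by blast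
    moreover have "l2 x < l1 x \<and> h1 x < h2 x" using a(3) x by blast
    ultimately show "l3 x < l1 x \<and> h1 x < h3 x" by linarith
  qed
  then show ?thesis unfolding encl_def using a by blast
qed

lemma between:
  "kle b1 e1 b2 e2 \<Longrightarrow> kle b2 e2 b3 e3 \<Longrightarrow> dm b1 e1 \<inter> dm b3 e3 \<subseteq> dm b2 e2"
  unfolding kle_def dm_def by (auto split: if_splits)

lemma kle_trans: "kle b1 e1 b2 e2 \<Longrightarrow> kle b2 e2 b3 e3 \<Longrightarrow> kle b1 e1 b3 e3"
  unfolding kle_def by auto

lemma kle_total: "kle b1 e1 b2 e2 \<or> kle b2 e2 b1 e1"
  unfolding kle_def by auto

lemma below_trans:
  assumes "good b2 e2 l2 h2" "below b1 e1 l1 h1 b2 e2 l2 h2" "below b2 e2 l2 h2 b3 e3 l3 h3"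
    "dm b1 e1 \<inter> dm b3 e3 \<subseteq> dm b2 e2"
  shows "below b1 e1 l1 h1 b3 e3 l3 h3"
  using assms unfolding below_def good_def
  by (metis (no_types, lifting) IntD1 IntD2 IntI dual_order.strict_trans1 order.strict_trans subsetD)

lemma encl_irrefl: "\<not> encl b e l h b e l h"
proof
  assume "encl b e l h b e l h"
  then have "l e < l e" unfolding encl_def using dm_e[of e b] by blast
  then show False by simp
qed

lemma below_irrefl: "good b e l h \<Longrightarrow> \<not> below b e l h b e l h"
  unfolding below_def good_def by (metis IntI dm_e less_irrefl)

lemma encl_disj:
  assumes "good b1 e1 l1 h1" "encl b1 e1 l1 h1 b2 e2 l2 h2"
  shows "cset b1 e1 l1 h1 \<inter> cset b2 e2 l2 h2 = {}"
proof -
  { fix x y assume "(x,y) \<in> cset b1 e1 l1 h1" "(x,y) \<in> cset b2 e2 l2 h2"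
    then have x: "x \<in> dm b1 e1" and y1: "y = l1 x \<or> y = h1 x" and y2: "y = l2 x \<or> y = h2 x"
      by (auto simp: cset_def)
    have "l2 x < l1 x" "h1 x < h2 x" "l1 x \<le> h1 x" using assms x by (auto simp: encl_def good_def)
    then have False using y1 y2 by auto }
  then show ?thesis by auto
qed

lemma below_disj:
  assumes "good b2 e2 l2 h2" "below b1 e1 l1 h1 b2 e2 l2 h2" "good b1 e1 l1 h1"
  shows "cset b1 e1 l1 h1 \<inter> cset b2 e2 l2 h2 = {}"
proof -
  { fix x y assume "(x,y) \<in> cset b1 e1 l1 h1" "(x,y) \<in> cset b2 e2 l2 h2"
    then have x: "x \<in> dm b1 e1" "x \<in> dm b2 e2" and y1: "y = l1 x \<or> y = h1 x" and y2: "y = l2 x \<or> y = h2 x"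
      by (auto simp: cset_def)
    have "h1 x < l2 x" "l2 x \<le> h2 x" using assms x by (auto simp: below_def good_def)
    moreover have "l1 x \<le> h1 x" using assms x by (auto simp: good_def)
    ultimately have False using y1 y2 by auto }
  then show ?thesis by auto
qed


lemma pasteL:
  fixes f g :: "real \<Rightarrow> real"
  assumes "a \<le> b" "continuous_on {..a} f" "continuous_on {a..b} g" "f a = g a"
  shows "continuous_on {..b} (\<lambda>x. if x \<le> a then f x else g x)"
proof -
  have "continuous_on ({..a} \<union> {a..b}) (\<lambda>x. if x \<le> a then f x else g x)"
    using assms by (intro continuous_on_cases) auto
  moreover have "{..a} \<union> {a..b} = {..b}" using assms by auto
  ultimately show ?thesis by simp
qed

lemma pasteR:
  fixes f g :: "real \<Rightarrow> real"
  assumes "a \<le> b" "continuous_on {a..b} f" "continuous_on {b..} g" "f b = g b"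
  shows "continuous_on {a..} (\<lambda>x. if x \<le> b then f x else g x)"
proof -
  have "continuous_on ({a..b} \<union> {b..}) (\<lambda>x. if x \<le> b then f x else g x)"
    using assms by (intro continuous_on_cases) auto
  moreover have "{a..b} \<union> {b..} = {a..}" using assms by auto
  ultimately show ?thesis by simp
qed

lemma ext_uw:
  assumes "two_way_inf_3mono_chain C" "non_wide C"
  shows "\<exists>b e u w. continuous_on (dm b e) u \<and> continuous_on (dm b e) w \<and> u e = w e \<and> C = cset b e u w"
proof -
  obtain a b R1 R3 f1 f2 f3 where r1: "closed_ray a R1" and r3: "closed_ray b R3"
    and c1: "continuous_on R1 f1" and c2: "continuous_on (closed_segment a b) f2"
    and c3: "continuous_on R3 f3" and j1: "f1 a = f2 a" and j2: "f2 b = f3 b"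
    and C: "C = xgraph R1 f1 \<union> xgraph (closed_segment a b) f2 \<union> xgraph R3 f3"
    using assms(1) unfolding two_way_inf_3mono_chain_def by blast
  obtain x0 where x0: "\<forall>p\<in>C. fst p \<noteq> x0" using assms(2) unfolding non_wide_def by blast
  have seg: "closed_segment a b = (if a \<le> b then {a..b} else {b..a})"
    by (rule closed_segment_eq_real_ivl)
  have inC: "(x0, f x0) \<notin> xgraph S f" if "xgraph S f \<subseteq> C" for S f
    using x0 that by (metis fst_conv subsetD)
  have inS: "x0 \<notin> S" if "xgraph S f \<subseteq> C" for S f
    using inC[OF that] by (auto simp: xgraph_def)
  have n1: "x0 \<notin> R1" and n2: "x0 \<notin> closed_segment a b" and n3: "x0 \<notin> R3"
    using inS C by auto
  consider "R1 = {..a}" "R3 = {b..}" | "R1 = {a..}" "R3 = {..b}" | "R1 = {..a}" "R3 = {..b}"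
    | "R1 = {a..}" "R3 = {b..}"
    using r1 r3 unfolding closed_ray_def by blast
  then show ?thesis
  proof cases
    case 1
    then show ?thesis using n1 n2 n3 seg by (auto split: if_splits)
  next
    case 2
    then show ?thesis using n1 n2 n3 seg by (auto split: if_splits)
  next
    case 3
    show ?thesis
    proof (cases "a \<le> b")
      case True
      define u where "u = (\<lambda>x. if x \<le> a then f1 x else f2 x)"
      have cu: "continuous_on (dm True b) u"
        unfolding u_def dm_def using pasteL[OF True, of f1 f2] c1 c2 j1 3 seg True by simp
      have cw: "continuous_on (dm True b) f3" using c3 3 by (simp add: dm_def)
      have ue: "u b = f3 b" using j1 j2 True by (auto simp: u_def)
      have "C = cset True b u f3"
        unfolding C 3 cset_def dm_def xgraph_def u_def using True seg j1 j2
        by (auto simp: image_iff split: if_splits)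
      then show ?thesis using cu cw ue by blast
    next
      case False
      define w where "w = (\<lambda>x. if x \<le> b then f3 x else f2 x)"
      have cw: "continuous_on (dm True a) w"
        unfolding w_def dm_def using pasteL[of b a f3 f2] c3 c2 j2 3 seg False by simp
      have cu: "continuous_on (dm True a) f1" using c1 3 by (simp add: dm_def)
      have ue: "f1 a = w a" using j1 j2 False by (auto simp: w_def)
      have "C = cset True a f1 w"
        unfolding C 3 cset_def dm_def xgraph_def w_def using False seg j1 j2
        by (auto simp: image_iff split: if_splits)
      then show ?thesis using cu cw ue by blast
    qed
  next
    case 4
    show ?thesis
    proof (cases "a \<le> b")
      case True
      define w where "w = (\<lambda>x. if x \<le> b then f2 x else f3 x)"
      have cw: "continuous_on (dm False a) w"
        unfolding w_def dm_def using pasteR[OF True, of f2 f3] c3 c2 j2 4 seg True by simp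
      have cu: "continuous_on (dm False a) f1" using c1 4 by (simp add: dm_def)
      have ue: "f1 a = w a" using j1 True by (auto simp: w_def)
      have "C = cset False a f1 w"
        unfolding C 4 cset_def dm_def xgraph_def w_def using True seg j1 j2
        by (auto simp: image_iff split: if_splits)
      then show ?thesis using cu cw ue by blast
    next
      case False
      define w where "w = (\<lambda>x. if x \<le> a then f2 x else f1 x)"
      have cw: "continuous_on (dm False b) w"
        unfolding w_def dm_def using pasteR[of b a f2 f1] c1 c2 j1 4 seg False by simp
      have cu: "continuous_on (dm False b) f3" using c3 4 by (simp add: dm_def)
      have ue: "f3 b = w b" using j2 False by (auto simp: w_def)
      have "C = cset False b f3 w"
        unfolding C 4 cset_def dm_def xgraph_def w_def using False seg j1 j2
        by (auto simp: image_iff split: if_splits)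
      then show ?thesis using cu cw ue by blast
    qed
  qed
qed

lemma extract_rep:
  assumes "two_way_inf_3mono_chain C" "non_wide C"
  shows "\<exists>b e l h. good b e l h \<and> C = cset b e l h"
proof -
  obtain b e u w where c: "continuous_on (dm b e) u" "continuous_on (dm b e) w" "u e = w e"
    "C = cset b e u w" using ext_uw[OF assms] by blast
  have "good b e (\<lambda>x. min (u x) (w x)) (\<lambda>x. max (u x) (w x))"
    unfolding good_def using c by (auto intro: continuous_intros)
  moreover have "C = cset b e (\<lambda>x. min (u x) (w x)) (\<lambda>x. max (u x) (w x))"
    unfolding c(4) cset_def by (auto simp: min_def max_def split: if_splits)
  ultimately show ?thesis by blast
qed


lemma clique_fin: "finite V \<Longrightarrow> finite {card S | S. S \<subseteq> V \<and> (\<forall>u\<in>S. \<forall>v\<in>S. u \<noteq> v \<longrightarrow> E u v)}"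
proof -
  assume "finite V"
  have "{card S | S. S \<subseteq> V \<and> (\<forall>u\<in>S. \<forall>v\<in>S. u \<noteq> v \<longrightarrow> E u v)} \<subseteq> card ` Pow V" by auto
  then show ?thesis using \<open>finite V\<close> finite_subset by blast
qed

lemma clique_le:
  assumes "finite V" "S \<subseteq> V" "\<forall>u\<in>S. \<forall>v\<in>S. u \<noteq> v \<longrightarrow> E u v"
  shows "card S \<le> clique_number V E"
  unfolding clique_number_def using assms clique_fin[OF assms(1), of E]
  by (intro Max_ge) auto

lemma height_exists:
  fixes R E :: "'v \<Rightarrow> 'v \<Rightarrow> bool"
  assumes fin: "finite V" and irr: "\<forall>u\<in>V. \<not> R u u"
    and tr: "\<forall>u\<in>V. \<forall>v\<in>V. \<forall>w\<in>V. R u v \<longrightarrow> R v w \<longrightarrow> R u w"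
    and re: "\<forall>u\<in>V. \<forall>v\<in>V. R u v \<longrightarrow> E u v" and sym: "\<forall>u v. E u v \<longrightarrow> E v u"
  shows "\<exists>h. (\<forall>v\<in>V. h v < clique_number V E) \<and> (\<forall>u\<in>V. \<forall>v\<in>V. R u v \<longrightarrow> h u < h v)"
proof -
  define ch where "ch v = {S. S \<subseteq> V \<and> v \<in> S \<and> (\<forall>x\<in>S. x = v \<or> R x v) \<and>
      (\<forall>x\<in>S. \<forall>y\<in>S. x \<noteq> y \<longrightarrow> R x y \<or> R y x)}" for v
  define hh where "hh v = Max (card ` ch v)" for v
  have finch: "finite (card ` ch v)" for v
  proof -
    have "ch v \<subseteq> Pow V" unfolding ch_def by auto
    then show ?thesis using fin by (meson finite_Pow_iff finite_imageI finite_subset)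
  qed
  have single: "{v} \<in> ch v" if "v \<in> V" for v unfolding ch_def using that by auto
  have ge1: "1 \<le> hh v" if "v \<in> V" for v
  proof -
    have "card {v} \<in> card ` ch v" using single[OF that] by (rule imageI)
    then have "card {v} \<le> hh v" unfolding hh_def using Max_ge[OF finch[of v]] by blast
    then show ?thesis by simp
  qed
  have leo: "hh v \<le> clique_number V E" if "v \<in> V" for v
  proof -
    have "card S \<le> clique_number V E" if "S \<in> ch v" for S
    proof (rule clique_le[OF fin])
      show "S \<subseteq> V" using that unfolding ch_def by auto
      show "\<forall>u\<in>S. \<forall>w\<in>S. u \<noteq> w \<longrightarrow> E u w"
      proof (intro ballI impI)
        fix u w assume a: "u \<in> S" "w \<in> S" "u \<noteq> w"
        have sub: "S \<subseteq> V" using that unfolding ch_def by auto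
        have "R u w \<or> R w u" using that a unfolding ch_def by auto
        then show "E u w" using re sym a sub by blast
      qed
    qed
    then show ?thesis unfolding hh_def using finch[of v] single[OF that]
      by (subst Max_le_iff) auto
  qed
  have mono: "hh u < hh v" if uv: "u \<in> V" "v \<in> V" "R u v" for u v
  proof -
    have "hh u \<in> card ` ch u" unfolding hh_def using finch[of u] single[OF uv(1)]
      by (intro Max_in) auto
    then obtain S where S: "S \<in> ch u" "card S = hh u" by auto
    have SV: "S \<subseteq> V" and uS: "u \<in> S" and Su: "\<forall>x\<in>S. x = u \<or> R x u"
      and Sc: "\<forall>x\<in>S. \<forall>y\<in>S. x \<noteq> y \<longrightarrow> R x y \<or> R y x"
      using S(1) unfolding ch_def by auto
    have vS: "v \<notin> S"
    proof
      assume "v \<in> S"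
      then have "v = u \<or> R v u" using Su by auto
      then show False
      proof
        assume "v = u" then show False using irr uv by auto
      next
        assume "R v u" then have "R u u" using tr uv by blast
        then show False using irr uv by blast
      qed
    qed
    have Sv: "\<forall>x\<in>S. R x v"
    proof
      fix x assume "x \<in> S"
      then have xV: "x \<in> V" and "x = u \<or> R x u" using SV Su by auto
      then show "R x v" using tr uv xV by blast
    qed
    have "insert v S \<in> ch v" unfolding ch_def using SV uv Sv Sc by auto
    then have "card (insert v S) \<le> hh v" unfolding hh_def using finch[of v] by (intro Max_ge) auto
    moreover have "card (insert v S) = card S + 1" using vS SV fin finite_subset by fastforce
    ultimately show ?thesis using S(2) by simp
  qed
  show ?thesis
  proof (rule exI[of _ "\<lambda>v. hh v - 1"], intro conjI ballI impI)
    fix v assume "v \<in> V" then show "hh v - 1 < clique_number V E" using ge1 leo by fastforce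
  next
    fix u v assume "u \<in> V" "v \<in> V" "R u v" then show "hh u - 1 < hh v - 1"
      using ge1 mono by fastforce
  qed
qed

lemma digits:
  fixes a b c a' b' c' w :: nat
  assumes "a < w" "b < w" "a' < w" "b' < w" "a + w * (b + w * c) = a' + w * (b' + w * c')"
  shows "a = a' \<and> b = b' \<and> c = c'"
proof -
  have "(a + w * (b + w * c)) mod w = a" using assms(1) by simp
  moreover have "(a' + w * (b' + w * c')) mod w = a'" using assms(3) by simp
  ultimately have 1: "a = a'" using assms(5) by metis
  have "(a + w * (b + w * c)) div w = b + w * c" using assms(1) by simp
  moreover have "(a' + w * (b' + w * c')) div w = b' + w * c'" using assms(3) by simp
  ultimately have 2: "b + w * c = b' + w * c'" using assms(5) by metis
  have "b = b'" using arg_cong[OF 2, of "\<lambda>z. z mod w"] assms(2,4) by simp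
  moreover have "c = c'" using arg_cong[OF 2, of "\<lambda>z. z div w"] assms(2,4) by simp
  ultimately show ?thesis using 1 by simp
qed

lemma bound3:
  fixes a b c w :: nat
  assumes "a < w" "b < w" "c < w"
  shows "a + w * (b + w * c) < w ^ 3"
proof -
  obtain k where k: "w = Suc k" using assms(1) by (cases w) auto
  have "a \<le> k" "b \<le> k" "c \<le> k" using assms k by auto
  then have "b + w * c \<le> k + w * k" by (intro add_mono mult_le_mono) auto
  then have "w * (b + w * c) \<le> w * (k + w * k)" by (rule mult_le_mono2)
  moreover have "a < w" by fact
  ultimately have "a + w * (b + w * c) < w + w * (k + w * k)" by linarith
  also have "w + w * (k + w * k) = w ^ 3"
    unfolding k by (simp add: power3_eq_cube algebra_simps)
  finally show ?thesis .
qed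

lemma color3:
  fixes R0 R1 R2 E :: "'v \<Rightarrow> 'v \<Rightarrow> bool"
  assumes fin: "finite V" and sym: "\<forall>u v. E u v \<longrightarrow> E v u"
    and o0: "\<forall>u\<in>V. \<not> R0 u u" "\<forall>u\<in>V. \<forall>v\<in>V. \<forall>w\<in>V. R0 u v \<longrightarrow> R0 v w \<longrightarrow> R0 u w"
       "\<forall>u\<in>V. \<forall>v\<in>V. R0 u v \<longrightarrow> E u v"
    and o1: "\<forall>u\<in>V. \<not> R1 u u" "\<forall>u\<in>V. \<forall>v\<in>V. \<forall>w\<in>V. R1 u v \<longrightarrow> R1 v w \<longrightarrow> R1 u w"
       "\<forall>u\<in>V. \<forall>v\<in>V. R1 u v \<longrightarrow> E u v"
    and o2: "\<forall>u\<in>V. \<not> R2 u u" "\<forall>u\<in>V. \<forall>v\<in>V. \<forall>w\<in>V. R2 u v \<longrightarrow> R2 v w \<longrightarrow> R2 u w"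
       "\<forall>u\<in>V. \<forall>v\<in>V. R2 u v \<longrightarrow> E u v"
    and cov: "\<forall>u\<in>V. \<forall>v\<in>V. E u v \<longrightarrow> R0 u v \<or> R0 v u \<or> R1 u v \<or> R1 v u \<or> R2 u v \<or> R2 v u"
  shows "chromatic_number V E \<le> clique_number V E ^ 3"
proof -
  let ?w = "clique_number V E"
  obtain h0 where h0: "\<forall>v\<in>V. h0 v < ?w" "\<forall>u\<in>V. \<forall>v\<in>V. R0 u v \<longrightarrow> h0 u < h0 v"
    using height_exists[OF fin o0 sym] by blast
  obtain h1 where h1: "\<forall>v\<in>V. h1 v < ?w" "\<forall>u\<in>V. \<forall>v\<in>V. R1 u v \<longrightarrow> h1 u < h1 v"
    using height_exists[OF fin o1 sym] by blast
  obtain h2 where h2: "\<forall>v\<in>V. h2 v < ?w" "\<forall>u\<in>V. \<forall>v\<in>V. R2 u v \<longrightarrow> h2 u < h2 v"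
    using height_exists[OF fin o2 sym] by blast
  define c where "c v = h0 v + ?w * (h1 v + ?w * h2 v)" for v
  have "\<forall>v\<in>V. c v < ?w ^ 3"
  proof
    fix v assume "v \<in> V"
    then have "h0 v < ?w" "h1 v < ?w" "h2 v < ?w" using h0(1) h1(1) h2(1) by auto
    then show "c v < ?w ^ 3" unfolding c_def by (rule bound3)
  qed
  moreover have "\<forall>u\<in>V. \<forall>v\<in>V. E u v \<longrightarrow> c u \<noteq> c v"
  proof (intro ballI impI)
    fix u v assume uv: "u \<in> V" "v \<in> V" "E u v"
    show "c u \<noteq> c v"
    proof
      assume "c u = c v"
      then have "h0 u = h0 v \<and> h1 u = h1 v \<and> h2 u = h2 v"
      proof -
        have "h0 u < ?w" "h1 u < ?w" "h0 v < ?w" "h1 v < ?w" using h0(1) h1(1) uv by auto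
        then show ?thesis using digits[of "h0 u" ?w "h1 u" "h0 v" "h1 v" "h2 u" "h2 v"] \<open>c u = c v\<close>
          unfolding c_def by blast
      qed
      then have eq: "h0 u = h0 v" "h1 u = h1 v" "h2 u = h2 v" by auto
      have "R0 u v \<or> R0 v u \<or> R1 u v \<or> R1 v u \<or> R2 u v \<or> R2 v u" using cov uv by blast
      moreover have "\<not> R0 u v" "\<not> R0 v u" using h0(2) uv(1,2) eq(1) by force+
      moreover have "\<not> R1 u v" "\<not> R1 v u" using h1(2) uv(1,2) eq(2) by force+
      moreover have "\<not> R2 u v" "\<not> R2 v u" using h2(2) uv(1,2) eq(3) by force+
      ultimately show False by blast
    qed
  qed
  ultimately show ?thesis unfolding chromatic_number_def by (intro Least_le) blast
qed


theorem mainTheorem11: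
  fixes V :: "'v set" and C :: "'v \<Rightarrow> (real \<times> real) set"
  assumes "finite V"
    and "\<And>v. v \<in> V \<Longrightarrow> two_way_inf_3mono_chain (C v)"
    and "\<And>v. v \<in> V \<Longrightarrow> non_wide (C v)"
  shows "chromatic_number V (disjointness_edge C)
           \<le> (clique_number V (disjointness_edge C)) ^ 3"
proof -
  have "\<forall>v\<in>V. \<exists>t. good (fst t) (fst (snd t)) (fst (snd (snd t))) (snd (snd (snd t))) \<and>
          C v = cset (fst t) (fst (snd t)) (fst (snd (snd t))) (snd (snd (snd t)))"
  proof
    fix v assume "v \<in> V"
    then obtain b e l h where "good b e l h \<and> C v = cset b e l h"
      using extract_rep assms(2,3) by blast
    then show "\<exists>t. good (fst t) (fst (snd t)) (fst (snd (snd t))) (snd (snd (snd t))) \<and>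
          C v = cset (fst t) (fst (snd t)) (fst (snd (snd t))) (snd (snd (snd t)))"
      by (intro exI[of _ "(b, e, l, h)"]) simp
  qed
  then obtain f where f: "\<forall>v\<in>V. good (fst (f v)) (fst (snd (f v))) (fst (snd (snd (f v)))) (snd (snd (snd (f v)))) \<and>
          C v = cset (fst (f v)) (fst (snd (f v))) (fst (snd (snd (f v)))) (snd (snd (snd (f v))))"
    by (rule bchoice[THEN exE]) blast
  define B where "B v = fst (f v)" for v
  define Ee where "Ee v = fst (snd (f v))" for v
  define L where "L v = fst (snd (snd (f v)))" for v
  define H where "H v = snd (snd (snd (f v)))" for v
  have gd: "\<And>v. v \<in> V \<Longrightarrow> good (B v) (Ee v) (L v) (H v)"
    and Cv: "\<And>v. v \<in> V \<Longrightarrow> C v = cset (B v) (Ee v) (L v) (H v)"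
    using f unfolding B_def Ee_def L_def H_def by auto
  define E where "E = disjointness_edge C"
  define R0 where "R0 u v = encl (B u) (Ee u) (L u) (H u) (B v) (Ee v) (L v) (H v)" for u v
  define BL where "BL u v = below (B u) (Ee u) (L u) (H u) (B v) (Ee v) (L v) (H v)" for u v
  define K where "K u v = kle (B u) (Ee u) (B v) (Ee v)" for u v
  define R1 where "R1 u v = (BL u v \<and> K u v)" for u v
  define R2 where "R2 u v = (BL u v \<and> K v u)" for u v
  have sym: "\<forall>u v. E u v \<longrightarrow> E v u" unfolding E_def disjointness_edge_def by blast
  have irr0: "\<forall>u\<in>V. \<not> R0 u u" unfolding R0_def using encl_irrefl by simp
  have irrB: "\<And>u. u \<in> V \<Longrightarrow> \<not> BL u u" unfolding BL_def using below_irrefl gd by simp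
  have irr1: "\<forall>u\<in>V. \<not> R1 u u" unfolding R1_def using irrB by blast
  have irr2: "\<forall>u\<in>V. \<not> R2 u u" unfolding R2_def using irrB by blast
  have tr0: "\<forall>u\<in>V. \<forall>v\<in>V. \<forall>w\<in>V. R0 u v \<longrightarrow> R0 v w \<longrightarrow> R0 u w"
    unfolding R0_def by (intro ballI impI, erule encl_trans)
  have trB: "BL u w" if "v \<in> V" "BL u v" "BL v w"
    "dm (B u) (Ee u) \<inter> dm (B w) (Ee w) \<subseteq> dm (B v) (Ee v)" for u v w
    unfolding BL_def by (rule below_trans[OF gd[OF that(1)] that(2)[unfolded BL_def] that(3)[unfolded BL_def] that(4)])
  have tr1: "\<forall>u\<in>V. \<forall>v\<in>V. \<forall>w\<in>V. R1 u v \<longrightarrow> R1 v w \<longrightarrow> R1 u w"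
  proof (intro ballI impI)
    fix u v w assume a: "u \<in> V" "v \<in> V" "w \<in> V" "R1 u v" "R1 v w"
    then have "K u v" "K v w" "BL u v" "BL v w" unfolding R1_def by auto
    moreover have "dm (B u) (Ee u) \<inter> dm (B w) (Ee w) \<subseteq> dm (B v) (Ee v)"
      using between \<open>K u v\<close> \<open>K v w\<close> unfolding K_def by blast
    ultimately show "R1 u w" unfolding R1_def using trB[OF a(2)] kle_trans[of "B u" "Ee u" "B v" "Ee v" "B w" "Ee w"]
      unfolding K_def by blast
  qed
  have tr2: "\<forall>u\<in>V. \<forall>v\<in>V. \<forall>w\<in>V. R2 u v \<longrightarrow> R2 v w \<longrightarrow> R2 u w"
  proof (intro ballI impI)
    fix u v w assume a: "u \<in> V" "v \<in> V" "w \<in> V" "R2 u v" "R2 v w"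
    then have "K v u" "K w v" "BL u v" "BL v w" unfolding R2_def by auto
    moreover have "dm (B w) (Ee w) \<inter> dm (B u) (Ee u) \<subseteq> dm (B v) (Ee v)"
      using between \<open>K v u\<close> \<open>K w v\<close> unfolding K_def by blast
    moreover have "K w u" using kle_trans[of "B w" "Ee w" "B v" "Ee v" "B u" "Ee u"] \<open>K v u\<close> \<open>K w v\<close>
      unfolding K_def by blast
    ultimately show "R2 u w" unfolding R2_def using trB[OF a(2), of u w] by (simp add: Int_commute)
  qed
  have edge: "E u v" if "u \<in> V" "v \<in> V" "u \<noteq> v"
    "cset (B u) (Ee u) (L u) (H u) \<inter> cset (B v) (Ee v) (L v) (H v) = {}" for u v
    using that Cv unfolding E_def disjointness_edge_def by simp
  have re0: "\<forall>u\<in>V. \<forall>v\<in>V. R0 u v \<longrightarrow> E u v"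
  proof (intro ballI impI)
    fix u v assume a: "u \<in> V" "v \<in> V" "R0 u v"
    then have "u \<noteq> v" using irr0 by blast
    moreover have "cset (B u) (Ee u) (L u) (H u) \<inter> cset (B v) (Ee v) (L v) (H v) = {}"
      by (rule encl_disj[OF gd[OF a(1)] a(3)[unfolded R0_def]])
    ultimately show "E u v" using edge a by blast
  qed
  have reB: "E u v" if "u \<in> V" "v \<in> V" "BL u v" for u v
  proof -
    have "u \<noteq> v" using irrB that by blast
    moreover have "cset (B u) (Ee u) (L u) (H u) \<inter> cset (B v) (Ee v) (L v) (H v) = {}"
      by (rule below_disj[OF gd[OF that(2)] that(3)[unfolded BL_def] gd[OF that(1)]])
    ultimately show "E u v" using edge that by blast
  qed
  have re1: "\<forall>u\<in>V. \<forall>v\<in>V. R1 u v \<longrightarrow> E u v" using reB unfolding R1_def by blast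
  have re2: "\<forall>u\<in>V. \<forall>v\<in>V. R2 u v \<longrightarrow> E u v" using reB unfolding R2_def by blast
  have cov: "\<forall>u\<in>V. \<forall>v\<in>V. E u v \<longrightarrow> R0 u v \<or> R0 v u \<or> R1 u v \<or> R1 v u \<or> R2 u v \<or> R2 v u"
  proof (intro ballI impI)
    fix u v assume a: "u \<in> V" "v \<in> V" "E u v"
    then have "cset (B u) (Ee u) (L u) (H u) \<inter> cset (B v) (Ee v) (L v) (H v) = {}"
      using Cv unfolding E_def disjointness_edge_def by simp
    then have "R0 u v \<or> R0 v u \<or> BL u v \<or> BL v u"
      using coverage[OF gd[OF a(1)] gd[OF a(2)]] unfolding R0_def BL_def by blast
    moreover have "K u v \<or> K v u" unfolding K_def using kle_total by blast
    ultimately show "R0 u v \<or> R0 v u \<or> R1 u v \<or> R1 v u \<or> R2 u v \<or> R2 v u"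
      unfolding R1_def R2_def by blast
  qed
  show ?thesis
    using color3[OF assms(1) sym irr0 tr0 re0 irr1 tr1 re1 irr2 tr2 re2 cov] unfolding E_def .
qed


end
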